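(* Let $\mathbf{v}_0\in\mathbb{R}^d_{\ge0}\setminus\{\mathbf{0}\}$ be fixed, for $u>0$ let $J:=\mathbf{v}_0+u\Delta_d$, and let $f(\mathbf{x}):=\log\left(\frac1d\sum_{j=1}^d e^{x_j}\right)$. Then $$\lim_{u\to\infty}\frac{\operatorname{vol}(P^0(f,J))-\operatorname{vol}(P(f,J))}{\operatorname{vol}(P^0(f,J))}=0.$$
   Context: $\Delta_d:=\{\mathbf{x}\in\mathbb{R}^d_{\ge0}:\sum_{j=1}^d x_j\le1\}$ is the standard $d$-simplex, so $J$ is the $d$-simplex with vertices $\mathbf{v}_0,\mathbf{v}_0+u\mathbf{e}_1,\dots,\mathbf{v}_0+u\mathbf{e}_d$. Let $\mu$ be the unique affine function agreeing with $f$ at the vertices of $J$ and $\mu(\mathbf{x},z):=z\mu(\mathbf{x}/z)$ (extended linearly in $(\mathbf{x},z)$). For $z\ge0$, $z\cdot J:=\{z\mathbf{x}:\mathbf{x}\in J\}$. Perspective relaxation: $P(f,J):=\operatorname{cl}\{(\mathbf{x},y,z)\in\mathbb{R}^d\times\mathbb{R}\times\mathbb{R}:\mu(\mathbf{x},z)\ge y\ge zf(\mathbf{x}/z),\ \mathbf{x}\in z\cdot J,\ 1\ge z>0\}$. Naive relaxation: $P^0(f,J):=\{(\mathbf{x},y,z)\in\mathbb{R}^d\times\mathbb{R}\times\mathbb{R}:\mu(\mathbf{x},z)\ge y\ge f(\mathbf{x}),\ \mathbf{x}\in z\cdot J,\ 1\ge z\ge0\}$. $\operatorname{vol}$ is $(d+2)$-dimensional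 Lebesgue measure. *)

theory Defs
  imports "HOL-Analysis.Analysis"
begin

definition std_simplex :: "(real ^ 'n) set" where
  "std_simplex = {x. (\<forall>j. 0 \<le> x $ j) \<and> (\<Sum>j\<in>UNIV. x $ j) \<le> 1}"

definition simplexJ :: "real ^ 'n \<Rightarrow> real \<Rightarrow> (real ^ 'n) set" where
  "simplexJ v0 u = {v0 + u *\<^sub>R x | x. x \<in> std_simplex}"

definition lme :: "real ^ 'n \<Rightarrow> real" where
  "lme x = ln ((1 / real CARD('n)) * (\<Sum>j\<in>UNIV. exp (x $ j)))"

definition affine_interp :: "(real ^ 'n \<Rightarrow> real) \<Rightarrow> real ^ 'n \<Rightarrow> real \<Rightarrow> (real ^ 'n \<Rightarrow> real)" where
  "affine_interp f v0 u = (THE g. (\<exists>a b. g = (\<lambda>x. a \<bullet> x + b)) \<and>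
       g v0 = f v0 \<and> (\<forall>j. g (v0 + u *\<^sub>R axis j 1) = f (v0 + u *\<^sub>R axis j 1)))"

text \<open>Homogenisation mu(x,z) := z mu(x/z), extended linearly in (x,z);
  for affine mu this is (mu x - mu 0) + z * mu 0.\<close>
definition homog :: "(real ^ 'n \<Rightarrow> real) \<Rightarrow> real ^ 'n \<Rightarrow> real \<Rightarrow> real" where
  "homog g x z = (g x - g 0) + z * g 0"

definition scaleset :: "real \<Rightarrow> (real ^ 'n) set \<Rightarrow> (real ^ 'n) set" where
  "scaleset z J = {z *\<^sub>R x | x. x \<in> J}"

definition persp_relax :: "(real ^ 'n \<Rightarrow> real) \<Rightarrow> real ^ 'n \<Rightarrow> real \<Rightarrow> ((real ^ 'n) \<times> real \<times> real) set" where
  "persp_relax f v0 u = closure ({(x, y, z). homog (affine_interp f v0 u) x z \<ge> y \<and>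
       y \<ge> z * f ((1 / z) *\<^sub>R x) \<and> x \<in> scaleset z (simplexJ v0 u) \<and> 1 \<ge> z \<and> z > 0} :: ((real ^ 'n) \<times> real \<times> real) set)"

definition naive_relax :: "(real ^ 'n \<Rightarrow> real) \<Rightarrow> real ^ 'n \<Rightarrow> real \<Rightarrow> ((real ^ 'n) \<times> real \<times> real) set" where
  "naive_relax f v0 u = {(x, y, z). homog (affine_interp f v0 u) x z \<ge> y \<and>
       y \<ge> f x \<and> x \<in> scaleset z (simplexJ v0 u) \<and> 1 \<ge> z \<and> z \<ge> 0}"

end

theory Submission
  imports Defs
begin

lemma lme_le:
  fixes x :: "real^'n"
  assumes "\<And>j. x$j \<le> c" shows "lme x \<le> c"
proof -
  have "(\<Sum>j\<in>UNIV. exp (x$j)) \<le> (\<Sum>j\<in>(UNIV::'n set). exp c)"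
    by (intro sum_mono) (use assms in auto)
  also have "\<dots> = real CARD('n) * exp c" by simp
  finally have 1: "(1 / real CARD('n)) * (\<Sum>j\<in>UNIV. exp (x$j)) \<le> exp c"
    by (simp add: field_simps)
  have 2: "0 < (1 / real CARD('n)) * (\<Sum>j\<in>UNIV. exp (x$j))"
    by (intro mult_pos_pos sum_pos) auto
  show ?thesis unfolding lme_def using ln_le_cancel_iff[OF 2, of "exp c"] 1 by simp
qed

lemma lme_ge:
  fixes x :: "real^'n"
  shows "x$j - ln (real CARD('n)) \<le> lme x"
proof -
  have "exp (x$j) \<le> (\<Sum>j\<in>UNIV. exp (x$j))"
    by (rule member_le_sum) auto
  then have 1: "exp (x$j) / real CARD('n) \<le> (1 / real CARD('n)) * (\<Sum>j\<in>UNIV. exp (x$j))"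
    by (simp add: divide_right_mono)
  have 0: "0 < exp (x$j) / real CARD('n)" by simp
  have "ln (exp (x$j) / real CARD('n)) = x$j - ln (real CARD('n))"
    by (simp add: ln_div)
  then show ?thesis unfolding lme_def using ln_le_cancel_iff[OF 0] 1 0 by (smt (verit))
qed

lemma lme_0: "lme (0::real^'n) = 0"
  unfolding lme_def by simp

lemma lme_cont: "continuous_on UNIV (lme :: real^'n \<Rightarrow> real)"
proof -
  have "continuous_on UNIV (\<lambda>x::real^'n. ln ((1 / real CARD('n)) * (\<Sum>j\<in>UNIV. exp (x $ j))))"
  proof -
    have nz: "(1 / real CARD('n)) * (\<Sum>j\<in>UNIV. exp (x $ j)) \<noteq> 0" for x :: "real^'n"
    proof -
      have "0 < (\<Sum>j\<in>UNIV. exp (x$j))" by (intro sum_pos) auto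
      then show ?thesis by simp
    qed
    show ?thesis using nz by (intro continuous_intros) auto
  qed
  then show ?thesis unfolding lme_def[abs_def] .
qed

lemma ex_max_idx:
  fixes x :: "real^'n"
  obtains m where "\<And>j. x$j \<le> x$m"
proof -
  let ?M = "Max (range (\<lambda>j. x$j))"
  have "?M \<in> range (\<lambda>j. x$j)" by (intro Max_in) auto
  then obtain m where "?M = x$m" by (metis rangeE)
  moreover have "x$j \<le> ?M" for j by (intro Max_ge) auto
  ultimately show ?thesis using that by auto
qed

lemma lme_persp:
  fixes x :: "real^'n"
  assumes z: "0 < z" "z \<le> 1"
  shows "lme x - ln (real CARD('n)) \<le> z * lme ((1/z) *\<^sub>R x)"
    and "z * lme ((1/z) *\<^sub>R x) \<le> lme x + ln (real CARD('n))"
proof -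
  obtain m where m: "\<And>j. x$j \<le> x$m" using ex_max_idx[of x] by blast
  have ld: "0 \<le> ln (real CARD('n))" by simp
  have a: "lme x \<le> x$m" by (rule lme_le) (rule m)
  have b: "x$m - ln (real CARD('n)) \<le> lme x" by (rule lme_ge)
  have c: "lme ((1/z) *\<^sub>R x) \<le> x$m / z"
    by (rule lme_le) (use m z in \<open>auto simp: divide_right_mono\<close>)
  have d: "x$m / z - ln (real CARD('n)) \<le> lme ((1/z) *\<^sub>R x)"
    using lme_ge[of "(1/z) *\<^sub>R x" m] by simp
  have c': "z * lme ((1/z) *\<^sub>R x) \<le> x$m"
    using mult_left_mono[OF c, of z] z by simp
  have d': "x$m - z * ln (real CARD('n)) \<le> z * lme ((1/z) *\<^sub>R x)"
    using mult_left_mono[OF d, of z] z by (simp add: right_diff_distrib)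
  have "z * ln (real CARD('n)) \<le> ln (real CARD('n))"
    using ld z by (simp add: mult_left_le_one_le)
  then show "lme x - ln (real CARD('n)) \<le> z * lme ((1/z) *\<^sub>R x)"
    using a d' by linarith
  show "z * lme ((1/z) *\<^sub>R x) \<le> lme x + ln (real CARD('n))"
    using b c' by linarith
qed

definition ia :: "(real ^ 'n \<Rightarrow> real) \<Rightarrow> real ^ 'n \<Rightarrow> real \<Rightarrow> real^'n" where
  "ia f v0 u = (\<chi> j. (f (v0 + u *\<^sub>R axis j 1) - f v0) / u)"

lemma affine_interp_eq:
  assumes u: "u \<noteq> 0"
  shows "affine_interp f v0 u = (\<lambda>x. ia f v0 u \<bullet> x + (f v0 - ia f v0 u \<bullet> v0))"
  unfolding affine_interp_def
proof (rule the_equality)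
  show "(\<exists>a b. (\<lambda>x. ia f v0 u \<bullet> x + (f v0 - ia f v0 u \<bullet> v0)) = (\<lambda>x. a \<bullet> x + b)) \<and>
    ia f v0 u \<bullet> v0 + (f v0 - ia f v0 u \<bullet> v0) = f v0 \<and>
    (\<forall>j. ia f v0 u \<bullet> (v0 + u *\<^sub>R axis j 1) + (f v0 - ia f v0 u \<bullet> v0) = f (v0 + u *\<^sub>R axis j 1))"
    using u by (auto simp: inner_add_right inner_axis ia_def)
next
  fix g assume "(\<exists>a b. g = (\<lambda>x. a \<bullet> x + b)) \<and> g v0 = f v0 \<and>
          (\<forall>j. g (v0 + u *\<^sub>R axis j 1) = f (v0 + u *\<^sub>R axis j 1))"
  then obtain a b where g: "g = (\<lambda>x. a \<bullet> x + b)" and g0: "a \<bullet> v0 + b = f v0"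
    and gj: "\<And>j. a \<bullet> (v0 + u *\<^sub>R axis j 1) + b = f (v0 + u *\<^sub>R axis j 1)" by auto
  have "a $ j = ia f v0 u $ j" for j
    using gj[of j] g0 u by (auto simp: inner_add_right inner_axis ia_def field_simps)
  then have "a = ia f v0 u" by (simp add: vec_eq_iff)
  then show "g = (\<lambda>x. ia f v0 u \<bullet> x + (f v0 - ia f v0 u \<bullet> v0))"
    using g g0 by auto
qed

lemma homog_aff: "homog (\<lambda>x. a \<bullet> x + b) x z = a \<bullet> x + z * b"
  unfolding homog_def by simp

lemma scaleset_iff:
  fixes v0 x :: "real^'n"
  assumes u: "0 < u" and z: "0 \<le> z"
  shows "x \<in> scaleset z (simplexJ v0 u) \<longleftrightarrow>
     (\<forall>j. z * v0$j \<le> x$j) \<and> (\<Sum>j\<in>UNIV. x$j - z * v0$j) \<le> z * u"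
proof
  assume "x \<in> scaleset z (simplexJ v0 u)"
  then obtain w where w: "w \<in> std_simplex" and x: "x = z *\<^sub>R (v0 + u *\<^sub>R w)"
    by (auto simp: scaleset_def simplexJ_def)
  have e: "x$j - z * v0$j = z * u * w$j" for j using x by (simp add: algebra_simps)
  have "\<forall>j. z * v0$j \<le> x$j"
    using e w u z by (auto simp: std_simplex_def) (smt (verit) mult_nonneg_nonneg)
  moreover have "(\<Sum>j\<in>UNIV. x$j - z * v0$j) \<le> z * u"
  proof -
    have "(\<Sum>j\<in>UNIV. x$j - z * v0$j) = z * u * (\<Sum>j\<in>UNIV. w$j)"
      by (simp add: e sum_distrib_left)
    also have "\<dots> \<le> z * u * 1"
      using w u z by (intro mult_left_mono) (auto simp: std_simplex_def)
    finally show ?thesis by simp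
  qed
  ultimately show "(\<forall>j. z * v0$j \<le> x$j) \<and> (\<Sum>j\<in>UNIV. x$j - z * v0$j) \<le> z * u" ..
next
  assume h: "(\<forall>j. z * v0$j \<le> x$j) \<and> (\<Sum>j\<in>UNIV. x$j - z * v0$j) \<le> z * u"
  show "x \<in> scaleset z (simplexJ v0 u)"
  proof (cases "z = 0")
    case True
    then have "\<forall>j. 0 \<le> x$j" and "(\<Sum>j\<in>UNIV. x$j) \<le> 0" using h by auto
    then have "(\<Sum>j\<in>UNIV. x$j) = 0" by (meson order_antisym sum_nonneg)
    then have "\<forall>j\<in>UNIV. x$j = 0" using \<open>\<forall>j. 0 \<le> x$j\<close>
      by (subst sum_nonneg_eq_0_iff[symmetric]) auto
    then have "x = 0" by (simp add: vec_eq_iff)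
    moreover have "(0::real^'n) \<in> std_simplex" by (simp add: std_simplex_def)
    ultimately show ?thesis using True unfolding scaleset_def simplexJ_def by force
  next
    case False
    then have zp: "0 < z" using z by simp
    define w where "w = (1 / (z*u)) *\<^sub>R (x - z *\<^sub>R v0)"
    have wj: "w$j = (x$j - z * v0$j) / (z*u)" for j by (simp add: w_def)
    have "w \<in> std_simplex"
    proof -
      have "\<forall>j. 0 \<le> w$j" using h zp u by (auto simp: wj)
      moreover have "(\<Sum>j\<in>UNIV. w$j) = (\<Sum>j\<in>UNIV. x$j - z * v0$j) / (z*u)"
        by (simp add: wj sum_divide_distrib)
      moreover have "\<dots> \<le> 1" using h zp u by (simp add: divide_le_eq_1)
      ultimately show ?thesis by (simp add: std_simplex_def)
    qed
    moreover have "x = z *\<^sub>R (v0 + u *\<^sub>R w)"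
      using zp u by (simp add: vec_eq_iff wj field_simps)
    ultimately show ?thesis unfolding scaleset_def simplexJ_def by blast
  qed
qed


lemma continuous_on_vec_nth' [continuous_intros]:
  fixes f :: "'a::topological_space \<Rightarrow> real^'n"
  shows
  "continuous_on S f \<Longrightarrow> continuous_on S (\<lambda>x. f x $ i)"
proof -
  assume f: "continuous_on S f"
  have "continuous_on (f ` S) (\<lambda>x. x$i)" by (rule linear_continuous_on[OF bounded_linear_vec_nth])
  from continuous_on_compose[OF f this] show ?thesis by (simp add: comp_def)
qed

lemma naive_char:
  fixes v0 :: "real^'n"
  assumes u: "0 < u"
  shows "naive_relax lme v0 u = {p. fst (snd p) \<le> ia lme v0 u \<bullet> fst p + snd (snd p) * (lme v0 - ia lme v0 u \<bullet> v0)
     \<and> lme (fst p) \<le> fst (snd p) \<and> (\<forall>j. snd (snd p) * v0$j \<le> fst p $ j)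
     \<and> (\<Sum>j\<in>UNIV. fst p $ j - snd (snd p) * v0$j) \<le> snd (snd p) * u \<and> snd (snd p) \<le> 1 \<and> 0 \<le> snd (snd p)}"
proof (rule set_eqI)
  fix p :: "(real^'n) \<times> real \<times> real"
  obtain x y z where p: "p = (x,y,z)" by (metis prod_cases3)
  show "p \<in> naive_relax lme v0 u \<longleftrightarrow> p \<in> {p. fst (snd p) \<le> ia lme v0 u \<bullet> fst p + snd (snd p) * (lme v0 - ia lme v0 u \<bullet> v0)
     \<and> lme (fst p) \<le> fst (snd p) \<and> (\<forall>j. snd (snd p) * v0$j \<le> fst p $ j)
     \<and> (\<Sum>j\<in>UNIV. fst p $ j - snd (snd p) * v0$j) \<le> snd (snd p) * u \<and> snd (snd p) \<le> 1 \<and> 0 \<le> snd (snd p)}"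
    unfolding p naive_relax_def affine_interp_eq[OF less_imp_neq[OF u, symmetric]] homog_aff
    using scaleset_iff[OF u, of z x v0] by auto
qed

lemma naive_closed:
  fixes v0 :: "real^'n"
  assumes u: "0 < u"
  shows "closed (naive_relax lme v0 u)"
  unfolding naive_char[OF u]
  by (intro closed_Collect_conj closed_Collect_le closed_Collect_all continuous_intros
      continuous_on_compose2[OF lme_cont, of UNIV]) auto

lemma persp_pre_char:
  fixes v0 :: "real^'n"
  assumes u: "0 < u"
  shows "{(x, y, z). homog (affine_interp lme v0 u) x z \<ge> y \<and>
       y \<ge> z * lme ((1 / z) *\<^sub>R x) \<and> x \<in> scaleset z (simplexJ v0 u) \<and> 1 \<ge> z \<and> z > 0}
   = {(x,y,z). y \<le> ia lme v0 u \<bullet> x + z * (lme v0 - ia lme v0 u \<bullet> v0)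
     \<and> z * lme ((1 / z) *\<^sub>R x) \<le> y \<and> (\<forall>j. z * v0$j \<le> x $ j)
     \<and> (\<Sum>j\<in>UNIV. x $ j - z * v0$j) \<le> z * u \<and> z \<le> 1 \<and> 0 < z}"
proof (rule set_eqI)
  fix p :: "(real^'n) \<times> real \<times> real"
  obtain x y z where p: "p = (x,y,z)" by (metis prod_cases3)
  show "p \<in> {(x, y, z). homog (affine_interp lme v0 u) x z \<ge> y \<and>
       y \<ge> z * lme ((1 / z) *\<^sub>R x) \<and> x \<in> scaleset z (simplexJ v0 u) \<and> 1 \<ge> z \<and> z > 0}
   \<longleftrightarrow> p \<in> {(x,y,z). y \<le> ia lme v0 u \<bullet> x + z * (lme v0 - ia lme v0 u \<bullet> v0)
     \<and> z * lme ((1 / z) *\<^sub>R x) \<le> y \<and> (\<forall>j. z * v0$j \<le> x $ j)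
     \<and> (\<Sum>j\<in>UNIV. x $ j - z * v0$j) \<le> z * u \<and> z \<le> 1 \<and> 0 < z}"
    unfolding p affine_interp_eq[OF less_imp_neq[OF u, symmetric]] homog_aff
    using scaleset_iff[OF u, of z x v0] by auto
qed


lemma slab_closed:
  fixes A :: "(real^'n) set" and g :: "real^'n \<Rightarrow> real"
  assumes A: "closed A" and g: "continuous_on UNIV g"
  shows "closed {(x,y,z::real). x \<in> A \<and> z1 \<le> z \<and> z \<le> z2 \<and> g x + c1 \<le> y \<and> y \<le> g x + c2}"
    (is "closed ?D")
proof -
  have "?D = {p. fst p \<in> A} \<inter> {p. z1 \<le> snd (snd p)} \<inter> {p. snd (snd p) \<le> z2}
     \<inter> {p. g (fst p) + c1 \<le> fst (snd p)} \<inter> {p. fst (snd p) \<le> g (fst p) + c2}"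
    by auto
  moreover have "closed {p::(real^'n)\<times>real\<times>real. fst p \<in> A}"
  proof -
    have "{p::(real^'n)\<times>real\<times>real. fst p \<in> A} = A \<times> UNIV" by auto
    then show ?thesis using closed_Times[OF A closed_UNIV] by simp
  qed
  moreover have "closed {p::(real^'n)\<times>real\<times>real. g (fst p) + c1 \<le> fst (snd p)}"
    by (intro closed_Collect_le continuous_intros continuous_on_compose2[OF g]) auto
  moreover have "closed {p::(real^'n)\<times>real\<times>real. fst (snd p) \<le> g (fst p) + c2}"
    by (intro closed_Collect_le continuous_intros continuous_on_compose2[OF g]) auto
  moreover have "closed {p::(real^'n)\<times>real\<times>real. z1 \<le> snd (snd p)}"
    by (intro closed_Collect_le continuous_intros)
  moreover have "closed {p::(real^'n)\<times>real\<times>real. snd (snd p) \<le> z2}"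
    by (intro closed_Collect_le continuous_intros)
  ultimately show ?thesis by (simp add: closed_Int)
qed

lemma slab_emeasure:
  fixes A :: "(real^'n) set" and g :: "real^'n \<Rightarrow> real"
  assumes A: "closed A" and g: "continuous_on UNIV g" and z: "z1 \<le> z2" and c: "c1 \<le> c2"
  shows "emeasure lborel {(x,y,z::real). x \<in> A \<and> z1 \<le> z \<and> z \<le> z2 \<and> g x + c1 \<le> y \<and> y \<le> g x + c2}
     = emeasure lborel A * ennreal ((z2-z1)*(c2-c1))" (is "emeasure lborel ?D = _")
proof -
  have cl: "closed ?D" by (rule slab_closed[OF A g])
  have Dm: "?D \<in> sets (lborel \<Otimes>\<^sub>M lborel)"
    unfolding lborel_prod using borel_closed[OF cl] by simp
  have Am: "A \<in> sets lborel" using A by (simp add: borel_closed)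
  have sl: "Pair x -` ?D = (if x \<in> A then {g x + c1 .. g x + c2} \<times> {z1..z2} else {})" for x
    by auto
  have box: "emeasure (lborel::(real\<times>real) measure) ({a..b} \<times> {c..d}) = ennreal ((b-a)*(d-c))"
    if "a \<le> b" "c \<le> d" for a b c d :: real
  proof -
    have "emeasure (lborel::(real\<times>real) measure) ({a..b} \<times> {c..d}) = emeasure (lborel \<Otimes>\<^sub>M lborel) ({a..b} \<times> {c..d})"
      by (simp add: lborel_prod)
    also have "\<dots> = emeasure lborel {a..b} * emeasure lborel {c..d}"
      by (rule lborel.emeasure_pair_measure_Times) auto
    also have "\<dots> = ennreal ((b-a)*(d-c))" using that by (simp add: ennreal_mult)
    finally show ?thesis .
  qed
  have "emeasure lborel ?D = emeasure (lborel \<Otimes>\<^sub>M lborel) ?D"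
    by (simp add: lborel_prod)
  also have "\<dots> = (\<integral>\<^sup>+x. emeasure lborel (Pair x -` ?D) \<partial>lborel)"
    by (rule lborel.emeasure_pair_measure_alt[OF Dm])
  also have "\<dots> = (\<integral>\<^sup>+x. ennreal ((z2-z1)*(c2-c1)) * indicator A x \<partial>lborel)"
    apply (rule nn_integral_cong)
    apply (simp only: sl)
    using box[of "g _ + c1" "g _ + c2" z1 z2] z c by (auto simp: indicator_def mult.commute)
  also have "\<dots> = ennreal ((z2-z1)*(c2-c1)) * emeasure lborel A"
    using Am by (simp add: nn_integral_cmult_indicator)
  finally show ?thesis by (simp add: mult.commute)
qed

lemma slab_measure:
  fixes lo hi :: "real^'n" and g :: "real^'n \<Rightarrow> real"
  assumes g: "continuous_on UNIV g" and z: "z1 \<le> z2" and c: "c1 \<le> c2"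
  shows "{(x,y,z::real). x \<in> cbox lo hi \<and> z1 \<le> z \<and> z \<le> z2 \<and> g x + c1 \<le> y \<and> y \<le> g x + c2} \<in> fmeasurable lborel"
    and "measure lborel {(x,y,z::real). x \<in> cbox lo hi \<and> z1 \<le> z \<and> z \<le> z2 \<and> g x + c1 \<le> y \<and> y \<le> g x + c2}
       = measure lborel (cbox lo hi) * ((z2-z1)*(c2-c1))"
proof -
  let ?D = "{(x,y,z::real). x \<in> cbox lo hi \<and> z1 \<le> z \<and> z \<le> z2 \<and> g x + c1 \<le> y \<and> y \<le> g x + c2}"
  have e: "emeasure lborel ?D = emeasure lborel (cbox lo hi) * ennreal ((z2-z1)*(c2-c1))"
    by (rule slab_emeasure[OF closed_cbox g z c])
  have eA: "emeasure lborel (cbox lo hi) = ennreal (measure lborel (cbox lo hi))"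
    by (rule emeasure_eq_ennreal_measure) (use emeasure_lborel_cbox_finite[of lo hi] in auto)
  have nn: "0 \<le> (z2-z1)*(c2-c1)" using z c by simp
  have e2: "emeasure lborel ?D = ennreal (measure lborel (cbox lo hi) * ((z2-z1)*(c2-c1)))"
    using e eA nn by (simp add: ennreal_mult)
  show "?D \<in> fmeasurable lborel"
    by (rule fmeasurableI) (use borel_closed[OF slab_closed[OF closed_cbox g]] e2 in auto)
  show "measure lborel ?D = measure lborel (cbox lo hi) * ((z2-z1)*(c2-c1))"
    using e2 nn by (simp add: measure_def)
qed


lemma inA:
  fixes v0 x :: "real^'n"
  assumes v0: "\<forall>j. 0 \<le> v0$j" and u: "0 < u" and z: "0 \<le> z" "z \<le> 1"
    and h1: "\<forall>j. z * v0$j \<le> x$j" and h2: "(\<Sum>j\<in>UNIV. x$j - z * v0$j) \<le> z * u"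
  shows "x \<in> cbox 0 (\<chi> j. v0$j + u)"
  unfolding mem_box_cart
proof (intro allI conjI)
  fix j
  have "0 \<le> z * v0$j" using v0 z by simp
  then show "0 $ j \<le> x $ j" using h1 by (simp add: order_trans)
  have "x$j - z * v0$j \<le> (\<Sum>k\<in>UNIV. x$k - z * v0$k)"
    by (rule member_le_sum) (use h1 in auto)
  moreover have "z * u \<le> u" using z u by (simp add: mult_left_le_one_le)
  moreover have "z * v0$j \<le> v0$j" using z v0 by (simp add: mult_left_le_one_le)
  ultimately show "x $ j \<le> (\<chi> j. v0$j + u) $ j" using h2 by simp
qed

lemma zero_case:
  fixes v0 x :: "real^'n"
  assumes h2: "(\<Sum>j\<in>UNIV. x$j - 0 * v0$j) \<le> 0 * u" and h1: "\<forall>j. 0 * v0$j \<le> x$j"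
  shows "x = 0"
proof -
  have "x$j \<le> 0" for j
  proof -
    have "x$j - 0 * v0$j \<le> (\<Sum>k\<in>UNIV. x$k - 0 * v0$k)"
      by (rule member_le_sum) (use h1 in auto)
    then show ?thesis using h2 by simp
  qed
  then show ?thesis using h1 by (simp add: vec_eq_iff order_antisym)
qed

lemma key:
  fixes v0 :: "real^'n"
  assumes v0: "\<forall>j. 0 \<le> v0$j" and u: "0 < u"
  shows "naive_relax lme v0 u \<in> fmeasurable lborel" (is "?N \<in> _")
    and "persp_relax lme v0 u \<in> fmeasurable lborel" (is "?P \<in> _")
    and "\<bar>measure lborel (naive_relax lme v0 u) - measure lborel (persp_relax lme v0 u)\<bar> \<le> measure lborel (cbox 0 (\<chi> j. v0$j + u)) * (2 * ln (real CARD('n)))"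
proof -
  define A where "A = cbox 0 (\<chi> j. v0$j + u)"
  define ld where "ld = ln (real CARD('n))"
  have ld0: "0 \<le> ld" unfolding ld_def by simp
  define a where "a = ia lme v0 u"
  define b where "b = lme v0 - a \<bullet> v0"
  define E where "E = {(x,y,z::real). x \<in> cbox 0 (\<chi> j. v0$j + u) \<and> 0 \<le> z \<and> z \<le> 1 \<and> lme x + -ld \<le> y \<and> y \<le> lme x + ld}"
  define C where "C = (\<Sum>j\<in>UNIV. \<bar>a$j\<bar> * (v0$j + u)) + \<bar>b\<bar> + ld"
  have C0: "0 \<le> C" unfolding C_def using ld0 v0 u by (intro add_nonneg_nonneg sum_nonneg) auto
  define F where "F = {(x,y,z::real). x \<in> cbox 0 (\<chi> j. v0$j + u) \<and> 0 \<le> z \<and> z \<le> 1 \<and> lme x + 0 \<le> y \<and> y \<le> lme x + C}"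
  have Efm: "E \<in> fmeasurable lborel" and mE: "measure lborel E = measure lborel A * (2 * ld)"
    using slab_measure[OF lme_cont, of 0 1 "-ld" ld 0 "\<chi> j. v0$j + u"] ld0
    unfolding E_def A_def by auto
  have Ffm: "F \<in> fmeasurable lborel"
    using slab_measure[OF lme_cont, of 0 1 0 C 0 "\<chi> j. v0$j + u"] C0
    unfolding F_def by auto
  have Ncl: "closed ?N" by (rule naive_closed[OF u])
  have Ecl: "closed E" unfolding E_def by (rule slab_closed[OF closed_cbox lme_cont])
  have Nch: "?N = {p. fst (snd p) \<le> a \<bullet> fst p + snd (snd p) * b
     \<and> lme (fst p) \<le> fst (snd p) \<and> (\<forall>j. snd (snd p) * v0$j \<le> fst p $ j)
     \<and> (\<Sum>j\<in>UNIV. fst p $ j - snd (snd p) * v0$j) \<le> snd (snd p) * u \<and> snd (snd p) \<le> 1 \<and> 0 \<le> snd (snd p)}"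
    unfolding a_def b_def by (rule naive_char[OF u])
  have NF: "?N \<subseteq> F"
  proof
    fix p assume "p \<in> ?N"
    then obtain x y z where p: "p = (x,y,z)" and y1: "y \<le> a \<bullet> x + z * b" and y2: "lme x \<le> y"
      and h1: "\<forall>j. z * v0$j \<le> x $ j" and h2: "(\<Sum>j\<in>UNIV. x $ j - z * v0$j) \<le> z * u"
      and z: "z \<le> 1" "0 \<le> z"
      unfolding Nch by (cases p rule: prod_cases3) auto
    have xA: "x \<in> cbox 0 (\<chi> j. v0$j + u)" by (rule inA[OF v0 u z(2) z(1) h1 h2])
    then have xb: "0 \<le> x$j" "x$j \<le> v0$j + u" for j by (auto simp: mem_box_cart)
    have "a \<bullet> x = (\<Sum>j\<in>UNIV. a$j * x$j)" by (simp add: inner_vec_def)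
    also have "\<dots> \<le> (\<Sum>j\<in>UNIV. \<bar>a$j\<bar> * (v0$j + u))"
    proof (rule sum_mono)
      fix j
      have "a$j * x$j \<le> \<bar>a$j\<bar> * x$j" using xb[of j] by (simp add: mult_right_mono)
      also have "\<dots> \<le> \<bar>a$j\<bar> * (v0$j + u)" using xb[of j] by (simp add: mult_left_mono)
      finally show "a$j * x$j \<le> \<bar>a$j\<bar> * (v0$j + u)" .
    qed
    finally have ax: "a \<bullet> x \<le> (\<Sum>j\<in>UNIV. \<bar>a$j\<bar> * (v0$j + u))" .
    have "z * b \<le> z * \<bar>b\<bar>" using z by (simp add: mult_left_mono)
    also have "\<dots> \<le> \<bar>b\<bar>" using z by (simp add: mult_left_le_one_le)
    finally have zb: "z * b \<le> \<bar>b\<bar>" .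
    have "x$(undefined) - ld \<le> lme x" unfolding ld_def by (rule lme_ge)
    then have "- ld \<le> lme x" using xb[of undefined] by simp
    then have "y \<le> lme x + C" using y1 ax zb unfolding C_def by simp
    then show "p \<in> F" unfolding F_def p using xA z y2 by simp
  qed
  show Nfm: "?N \<in> fmeasurable lborel"
    by (rule fmeasurableI2[OF Ffm NF]) (use borel_closed[OF Ncl] in simp)
  define S where "S = {(x, y, z). homog (affine_interp lme v0 u) x z \<ge> y \<and>
       y \<ge> z * lme ((1 / z) *\<^sub>R x) \<and> x \<in> scaleset z (simplexJ v0 u) \<and> 1 \<ge> z \<and> z > 0}"
  have Sch: "S = {(x,y,z). y \<le> a \<bullet> x + z * b
     \<and> z * lme ((1 / z) *\<^sub>R x) \<le> y \<and> (\<forall>j. z * v0$j \<le> x $ j)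
     \<and> (\<Sum>j\<in>UNIV. x $ j - z * v0$j) \<le> z * u \<and> z \<le> 1 \<and> 0 < z}"
    unfolding S_def a_def b_def by (rule persp_pre_char[OF u])
  have Pdef: "?P = closure S" unfolding S_def persp_relax_def by simp
  have SNE: "S \<subseteq> ?N \<union> E"
  proof
    fix p assume "p \<in> S"
    then obtain x y z where p: "p = (x,y,z)" and y1: "y \<le> a \<bullet> x + z * b" and y2: "z * lme ((1 / z) *\<^sub>R x) \<le> y"
      and h1: "\<forall>j. z * v0$j \<le> x $ j" and h2: "(\<Sum>j\<in>UNIV. x $ j - z * v0$j) \<le> z * u"
      and z: "z \<le> 1" "0 < z"
      unfolding Sch by auto
    show "p \<in> ?N \<union> E"
    proof (cases "lme x \<le> y")
      case True
      then show ?thesis unfolding Nch p using y1 h1 h2 z by simp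
    next
      case False
      have xA: "x \<in> cbox 0 (\<chi> j. v0$j + u)" by (rule inA[OF v0 u _ z(1) h1 h2]) (use z in simp)
      have "lme x - ld \<le> z * lme ((1/z) *\<^sub>R x)" unfolding ld_def by (rule lme_persp(1)[OF z(2) z(1)])
      then show ?thesis unfolding E_def p using xA z y2 False by simp
    qed
  qed
  have PNE: "?P \<subseteq> ?N \<union> E"
    unfolding Pdef by (rule closure_minimal[OF SNE closed_Un[OF Ncl Ecl]])
  have NEfm: "?N \<union> E \<in> fmeasurable lborel" using Nfm Efm by (rule fmeasurable.Un)
  show Pfm: "?P \<in> fmeasurable lborel"
    by (rule fmeasurableI2[OF NEfm PNE]) (use borel_closed[of ?P] Pdef in simp)
  have NPE: "?N - ?P \<subseteq> E"
  proof
    fix p assume pin: "p \<in> ?N - ?P"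
    then have pN: "p \<in> ?N" and pS: "p \<notin> S" using closure_subset[of S] Pdef by auto
    from pN obtain x y z where p: "p = (x,y,z)" and y1: "y \<le> a \<bullet> x + z * b" and y2: "lme x \<le> y"
      and h1: "\<forall>j. z * v0$j \<le> x $ j" and h2: "(\<Sum>j\<in>UNIV. x $ j - z * v0$j) \<le> z * u"
      and z: "z \<le> 1" "0 \<le> z"
      unfolding Nch by (cases p rule: prod_cases3) auto
    have xA: "x \<in> cbox 0 (\<chi> j. v0$j + u)" by (rule inA[OF v0 u z(2) z(1) h1 h2])
    show "p \<in> E"
    proof (cases "z = 0")
      case True
      then have "x = 0" using zero_case[of x v0 u] h1 h2 by simp
      then have "y \<le> lme x + ld" using y1 True ld0 by (simp add: lme_0)
      then show ?thesis unfolding E_def p using xA z y2 ld0 by simp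
    next
      case False
      then have zp: "0 < z" using z by simp
      have "\<not> z * lme ((1 / z) *\<^sub>R x) \<le> y"
        using pS unfolding Sch p using y1 h1 h2 z zp by auto
      moreover have "z * lme ((1/z) *\<^sub>R x) \<le> lme x + ld" unfolding ld_def by (rule lme_persp(2)[OF zp z(1)])
      ultimately show ?thesis unfolding E_def p using xA z y2 ld0 by simp
    qed
  qed
  have PNE2: "?P - ?N \<subseteq> E" using PNE by auto
  have "measure lborel ?N - measure lborel ?P \<le> measure lborel (?N - ?P)"
    by (rule measure_diff_le_measure_setdiff[OF Nfm Pfm])
  also have "\<dots> \<le> measure lborel E"
    by (rule measure_mono_fmeasurable[OF NPE _ Efm]) (intro sets.Diff fmeasurableD Nfm Pfm)
  finally have 1: "measure lborel ?N - measure lborel ?P \<le> measure lborel E" .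
  have "measure lborel ?P - measure lborel ?N \<le> measure lborel (?P - ?N)"
    by (rule measure_diff_le_measure_setdiff[OF Pfm Nfm])
  also have "\<dots> \<le> measure lborel E"
    by (rule measure_mono_fmeasurable[OF PNE2 _ Efm]) (intro sets.Diff fmeasurableD Nfm Pfm)
  finally have 2: "measure lborel ?P - measure lborel ?N \<le> measure lborel E" .
  show "\<bar>measure lborel ?N - measure lborel ?P\<bar> \<le> measure lborel (cbox 0 (\<chi> j. v0$j + u)) * (2 * ln (real CARD('n)))"
    using 1 2 mE unfolding A_def ld_def by linarith
qed


lemma lin_aux:
  fixes A S Z u l V X y :: real
  shows "A = S + Z \<Longrightarrow> 3*u/16 - 3*(l+V)/16 \<le> S \<Longrightarrow> -l \<le> Z \<Longrightarrow> X \<le> V + u/8 \<Longrightarrow>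
    y \<le> X + u/32 \<Longrightarrow> 40*V+40*l+40 \<le> u \<Longrightarrow> 0\<le>V \<Longrightarrow> 0\<le>l \<Longrightarrow> y \<le> A"
  by argo

lemma lower:
  fixes v0 :: "real^'n"
  assumes v0: "\<forall>j. 0 \<le> v0$j" and d2: "2 \<le> CARD('n)"
    and u: "40 * ((\<Sum>j\<in>UNIV. v0$j) + ln (real CARD('n)) + 1) \<le> u"
  shows "(u / (16 * real CARD('n))) ^ CARD('n) * (1/2 * (u/32)) \<le> measure lborel (naive_relax lme v0 u)"
proof -
  define d where "d = real CARD('n)"
  define V where "V = (\<Sum>j\<in>UNIV. v0$j)"
  define ld where "ld = ln d"
  have d2': "2 \<le> d" unfolding d_def using d2 by simp
  have ld0: "0 \<le> ld" unfolding ld_def using d2' by simp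
  have V0: "0 \<le> V" unfolding V_def using v0 by (simp add: sum_nonneg)
  have vV: "v0$j \<le> V" for j unfolding V_def by (rule member_le_sum) (use v0 in auto)
  have uU0: "40 * (V + ld + 1) \<le> u" using u unfolding V_def ld_def d_def .
  have uU: "40 * V + 40 * ld + 40 \<le> u" using uU0 by (simp add: algebra_simps)
  have up: "0 < u" using uU V0 ld0 by linarith
  define a where "a = ia lme v0 u"
  define b where "b = lme v0 - a \<bullet> v0"
  define lo :: "real^'n" where "lo = (\<chi> j. v0$j + 3*u/(16*d))"
  define hi :: "real^'n" where "hi = (\<chi> j. v0$j + 4*u/(16*d))"
  define L where "L = {(x,y,z::real). x \<in> cbox lo hi \<and> 1/2 \<le> z \<and> z \<le> 1 \<and> lme x + 0 \<le> y \<and> y \<le> lme x + u/32}"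
  have Lfm: "L \<in> fmeasurable lborel" and mL: "measure lborel L = measure lborel (cbox lo hi) * ((1 - 1/2) * (u/32 - 0))"
    using slab_measure[OF lme_cont, of "1/2" 1 0 "u/32" lo hi] up unfolding L_def by auto
  have dp: "0 < d" using d2' by simp
  have lohi: "lo$j \<le> hi$j" for j unfolding lo_def hi_def using up dp by (simp add: field_simps)
  have mB: "measure lborel (cbox lo hi) = (u / (16 * d)) ^ CARD('n)"
  proof -
    have "cbox lo hi \<noteq> {}" using lohi by (simp add: interval_eq_empty_cart not_less)
    then have "measure lborel (cbox lo hi) = (\<Prod>i\<in>UNIV. hi$i - lo$i)" by (rule content_cbox_cart)
    also have "\<dots> = (\<Prod>i\<in>(UNIV::'n set). u / (16 * d))"
      by (rule prod.cong) (auto simp: lo_def hi_def field_simps)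
    finally show ?thesis by simp
  qed
  have Nch: "naive_relax lme v0 u = {p. fst (snd p) \<le> a \<bullet> fst p + snd (snd p) * b
     \<and> lme (fst p) \<le> fst (snd p) \<and> (\<forall>j. snd (snd p) * v0$j \<le> fst p $ j)
     \<and> (\<Sum>j\<in>UNIV. fst p $ j - snd (snd p) * v0$j) \<le> snd (snd p) * u \<and> snd (snd p) \<le> 1 \<and> 0 \<le> snd (snd p)}"
    unfolding a_def b_def by (rule naive_char[OF up])
  have aj: "1 - (ld + V)/u \<le> a$j" for j
  proof -
    have "(v0 + u *\<^sub>R axis j 1)$j - ld \<le> lme (v0 + u *\<^sub>R axis j 1)"
      unfolding ld_def d_def by (rule lme_ge)
    then have 1: "v0$j + u - ld \<le> lme (v0 + u *\<^sub>R axis j 1)" by (simp add: axis_def)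
    have 2: "lme v0 \<le> V" by (rule lme_le) (rule vV)
    have "u - ld - V \<le> lme (v0 + u *\<^sub>R axis j 1) - lme v0" using 1 2 v0 by (smt (verit))
    then have "(u - ld - V)/u \<le> (lme (v0 + u *\<^sub>R axis j 1) - lme v0)/u"
      using up by (simp add: divide_right_mono)
    moreover have "(u - ld - V)/u = 1 - (ld + V)/u" using up by (simp add: field_simps)
    ultimately show ?thesis unfolding a_def ia_def by simp
  qed
  have kappa: "0 \<le> 1 - (ld + V)/u" using uU up V0 ld0 by (simp add: field_simps)
  have lv0: "- ld \<le> lme v0"
  proof -
    have "v0$undefined - ld \<le> lme v0" unfolding ld_def d_def by (rule lme_ge)
    then show ?thesis using v0 by (smt (verit))
  qed
  have LN: "L \<subseteq> naive_relax lme v0 u"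
  proof
    fix p assume "p \<in> L"
    then obtain x y z where p: "p = (x,y,z)" and xB: "x \<in> cbox lo hi" and z: "1/2 \<le> z" "z \<le> 1"
      and y1: "lme x \<le> y" and y2: "y \<le> lme x + u/32"
      unfolding L_def by (cases p rule: prod_cases3) auto
    have xb: "v0$j + 3*u/(16*d) \<le> x$j" "x$j \<le> v0$j + 4*u/(16*d)" for j
      using xB unfolding mem_box_cart lo_def hi_def by auto
    have t0: "0 \<le> x$j - z * v0$j" and t1: "x$j - v0$j \<le> x$j - z * v0$j"
      and t2: "x$j - z * v0$j \<le> 4*u/(16*d) + v0$j" for j
    proof -
      have "z * v0$j \<le> v0$j" using z v0 by (simp add: mult_left_le_one_le)
      moreover have "0 \<le> z * v0$j" using z v0 by simp
      moreover have "0 \<le> 3*u/(16*d)" using up dp by simp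
      ultimately show "0 \<le> x$j - z * v0$j" "x$j - v0$j \<le> x$j - z * v0$j"
        "x$j - z * v0$j \<le> 4*u/(16*d) + v0$j" using xb[of j] by linarith+
    qed
    have h1: "\<forall>j. z * v0$j \<le> x$j" using t0 by simp
    have "(\<Sum>j\<in>UNIV. x$j - z * v0$j) \<le> (\<Sum>j\<in>UNIV. 4*u/(16*d) + v0$j)"
      by (rule sum_mono) (rule t2)
    also have "\<dots> = u/4 + V" unfolding V_def using dp by (simp add: sum.distrib d_def)
    also have "\<dots> \<le> z * u"
    proof -
      have "(1/2) * u \<le> z * u" using z up by (intro mult_right_mono) auto
      then show ?thesis using uU V0 ld0 by linarith
    qed
    finally have h2: "(\<Sum>j\<in>UNIV. x$j - z * v0$j) \<le> z * u" .
    have S3: "3*u/16 \<le> (\<Sum>j\<in>UNIV. x$j - z * v0$j)"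
    proof -
      have "(\<Sum>j\<in>(UNIV::'n set). 3*u/(16*d)) \<le> (\<Sum>j\<in>UNIV. x$j - z * v0$j)"
        by (rule sum_mono) (use xb t1 in smt)
      moreover have "(\<Sum>j\<in>(UNIV::'n set). 3*u/(16*d)) = 3*u/16" using dp by (simp add: d_def)
      ultimately show ?thesis by linarith
    qed
    have "a \<bullet> x + z * b = (\<Sum>j\<in>UNIV. a$j * (x$j - z * v0$j)) + z * lme v0"
      unfolding b_def by (simp add: inner_vec_def algebra_simps sum_subtractf sum_distrib_left)
    moreover have "3*u/16 - 3*(ld+V)/16 \<le> (\<Sum>j\<in>UNIV. a$j * (x$j - z * v0$j))"
    proof -
      have eq: "(1 - (ld + V)/u) * (3*u/16) = 3*u/16 - 3*(ld+V)/16" using up by (simp add: field_simps)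
      have "(1 - (ld + V)/u) * (3*u/16) \<le> (1 - (ld + V)/u) * (\<Sum>j\<in>UNIV. x$j - z * v0$j)"
        using S3 kappa by (rule mult_left_mono)
      also have "\<dots> = (\<Sum>j\<in>UNIV. (1 - (ld + V)/u) * (x$j - z * v0$j))" by (simp add: sum_distrib_left)
      also have "\<dots> \<le> (\<Sum>j\<in>UNIV. a$j * (x$j - z * v0$j))"
        by (rule sum_mono) (use aj t0 in \<open>simp add: mult_right_mono\<close>)
      finally show ?thesis unfolding eq .
    qed
    moreover have "- ld \<le> z * lme v0"
    proof (cases "0 \<le> lme v0")
      case True
      have "0 \<le> z * lme v0" using True z by simp
      then show ?thesis using ld0 by linarith
    next
      case False
      have "z * (- lme v0) \<le> - lme v0" using z False by (intro mult_left_le_one_le) auto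
      then have "lme v0 \<le> z * lme v0" by simp
      then show ?thesis using lv0 by simp
    qed
    moreover have "lme x \<le> V + u/8"
    proof (rule lme_le)
      fix j
      have "4*u/(16*d) \<le> u/8" using up d2' by (simp add: field_simps)
      then show "x$j \<le> V + u/8" using xb(2)[of j] vV[of j] by simp
    qed
    ultimately have "y \<le> a \<bullet> x + z * b" using y2 uU V0 ld0 by (rule lin_aux)
    then show "p \<in> naive_relax lme v0 u" unfolding Nch p using y1 h1 h2 z by simp
  qed
  have "measure lborel L \<le> measure lborel (naive_relax lme v0 u)"
    by (rule measure_mono_fmeasurable[OF LN fmeasurableD[OF Lfm] key(1)[OF v0 up]])
  then show ?thesis unfolding mL mB d_def by simp
qed


theorem theorem16:
  fixes v0 :: "real ^ 'n"
  assumes "\<forall>j. 0 \<le> v0 $ j" and "v0 \<noteq> 0"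
  shows "((\<lambda>u. (measure lborel (naive_relax lme v0 u) - measure lborel (persp_relax lme v0 u))
               / measure lborel (naive_relax lme v0 u)) \<longlongrightarrow> 0) at_top"
proof -
  note v0 = assms(1)
  define d where "d = CARD('n)"
  define V where "V = (\<Sum>j\<in>UNIV. v0$j)"
  define ld where "ld = ln (real d)"
  have d1: "1 \<le> d" unfolding d_def by (simp add: Suc_le_eq)
  have V0: "0 \<le> V" unfolding V_def using v0 by (simp add: sum_nonneg)
  have vV: "v0$j \<le> V" for j unfolding V_def by (rule member_le_sum) (use v0 in auto)
  have ld0: "0 \<le> ld" unfolding ld_def using d1 by simp
  have mA: "measure lborel (cbox 0 (\<chi> j. v0$j + u)) \<le> (V + u) ^ d" if u: "0 < u" for u
  proof -
    have "cbox 0 (\<chi> j. v0$j + u) \<noteq> {}" using v0 u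
      by (simp add: interval_eq_empty_cart not_less)
    then have "measure lborel (cbox 0 (\<chi> j. v0$j + u)) = (\<Prod>i\<in>UNIV. v0$i + u)"
      by (simp add: content_cbox_cart)
    also have "\<dots> \<le> (\<Prod>i\<in>(UNIV::'n set). V + u)"
      by (rule prod_mono) (use v0 vV u in \<open>auto simp: add_nonneg_nonneg less_imp_le\<close>)
    also have "\<dots> = (V + u) ^ d" by (simp add: d_def)
    finally show ?thesis .
  qed
  have bnd: "\<bar>measure lborel (naive_relax lme v0 u) - measure lborel (persp_relax lme v0 u)\<bar> \<le> (V + u) ^ d * (2 * ld)"
    if u: "0 < u" for u
  proof -
    have "\<bar>measure lborel (naive_relax lme v0 u) - measure lborel (persp_relax lme v0 u)\<bar>
      \<le> measure lborel (cbox 0 (\<chi> j. v0$j + u)) * (2 * ld)"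
      using key(3)[OF v0 u] unfolding ld_def d_def .
    also have "\<dots> \<le> (V + u) ^ d * (2 * ld)" using mA[OF u] ld0 by (simp add: mult_right_mono)
    finally show ?thesis .
  qed
  show ?thesis
  proof (cases "d = 1")
    case True
    then have "ld = 0" unfolding ld_def by simp
    have "eventually (\<lambda>u. (measure lborel (naive_relax lme v0 u) - measure lborel (persp_relax lme v0 u))
               / measure lborel (naive_relax lme v0 u) = 0) at_top"
      using eventually_gt_at_top[of "0::real"]
    proof (rule eventually_mono)
      fix u :: real assume "0 < u"
      from bnd[OF this] \<open>ld = 0\<close> show "(measure lborel (naive_relax lme v0 u) - measure lborel (persp_relax lme v0 u))
               / measure lborel (naive_relax lme v0 u) = 0" by simp
    qed
    then show ?thesis by (rule tendsto_eventually)
  next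
    case False
    then have d2: "2 \<le> CARD('n)" using d1 unfolding d_def by linarith
    define g where "g = (\<lambda>u::real. 128 * ld * (16 * real d) ^ d * (1 + V * inverse u) ^ d * inverse u)"
    have ev: "eventually (\<lambda>u. norm ((measure lborel (naive_relax lme v0 u) - measure lborel (persp_relax lme v0 u))
               / measure lborel (naive_relax lme v0 u)) \<le> g u) at_top"
      using eventually_ge_at_top[of "40 * (V + ld + 1)"]
    proof (rule eventually_mono)
      fix u :: real assume uU: "40 * (V + ld + 1) \<le> u"
      then have up: "0 < u" using V0 ld0 by (simp add: algebra_simps)
      define mN where "mN = measure lborel (naive_relax lme v0 u)"
      define mP where "mP = measure lborel (persp_relax lme v0 u)"
      have low: "(u / (16 * real d)) ^ d * (1/2 * (u/32)) \<le> mN"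
        unfolding mN_def d_def using lower[OF v0 d2] uU unfolding V_def ld_def d_def by simp
      have lp: "0 < (u / (16 * real d)) ^ d * (1/2 * (u/32))" using up d1 by simp
      have "norm ((mN - mP) / mN) = \<bar>mN - mP\<bar> / mN" using low lp by simp
      also have "\<dots> \<le> ((V + u) ^ d * (2 * ld)) / ((u / (16 * real d)) ^ d * (1/2 * (u/32)))"
        by (rule frac_le) (use bnd[OF up] lp low V0 up ld0 in \<open>auto simp: mN_def mP_def\<close>)
      also have "\<dots> = g u"
      proof -
        have "(V + u) ^ d = u ^ d * (1 + V * inverse u) ^ d"
          using up by (simp add: power_mult_distrib[symmetric] field_simps)
        moreover have "(u / (16 * real d)) ^ d = u ^ d / (16 * real d) ^ d" by (simp add: power_divide)
        ultimately show ?thesis unfolding g_def using up d1 by (simp add: field_simps)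
      qed
      finally show "norm ((mN - mP) / mN) \<le> g u" .
    qed
    have "(g \<longlongrightarrow> 128 * ld * (16 * real d) ^ d * (1 + V * 0) ^ d * 0) at_top"
      unfolding g_def
      by (intro tendsto_intros tendsto_inverse_0_at_top filterlim_ident)
    then have "(g \<longlongrightarrow> 0) at_top" by simp
    with ev show ?thesis by (rule Lim_null_comparison)
  qed
qed

end
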